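(* Let $\xi=(\tau_L,\delta_L,\tau_R,\delta_R)\in\Phi$ and suppose $J_2(\xi)<1$. Then the set $\Xi=\left\{(x,y)\in\mathbb{R}^2: \|f_\xi^{-i}(x,y)\|\to\infty \text{ as } i\to\infty\right\}$ is dense in $\mathbb{R}^2$.
   Context: For $\xi=(\tau_L,\delta_L,\tau_R,\delta_R)\in\mathbb{R}^4$ define $f_\xi(x,y)=(\tau_L x+y+1,\,-\delta_L x)$ if $x\le 0$ and $f_\xi(x,y)=(\tau_R x+y+1,\,-\delta_R x)$ if $x\ge 0$. Let $\Phi=\{\xi: \tau_L>\delta_L+1,\ \delta_L>0,\ \tau_R<-(\delta_R+1),\ \delta_R>0\}$; for $\xi\in\Phi$, $f_\xi$ is a homeomorphism, $\begin{bmatrix}\tau_L&1\\-\delta_L&0\end{bmatrix}$ has real eigenvalues $0<\lambda_L^s<1<\lambda_L^u$ and $\begin{bmatrix}\tau_R&1\\-\delta_R&0\end{bmatrix}$ has real eigenvalues $\lambda_R^u<-1<\lambda_R^s<0$. Let $J_2(\xi)=\max\left\{\lambda_L^s,\frac{\sqrt2\,\lambda_L^s}{\lambda_L^s+1}\right\}+\max\left\{|\lambda_R^s|,\frac{\sqrt2\,|\lambda_R^s|}{|\lambda_R^s|+1}\right\}$. $\|\cdot\|$ is the Euclidean norm. *)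

theory Defs
  imports "HOL-Analysis.Analysis"
begin

text \<open>Parameters xi = (tauL, deltaL, tauR, deltaR). Points of R^2 are real pairs
  (the norm on real \<times> real is the Euclidean norm).\<close>

definition bcnf :: "real \<times> real \<times> real \<times> real \<Rightarrow> real \<times> real \<Rightarrow> real \<times> real" where
  "bcnf xi p = (case xi of (tL, dL, tR, dR) \<Rightarrow> case p of (x, y) \<Rightarrow>
     (if x \<le> 0 then (tL * x + y + 1, - dL * x) else (tR * x + y + 1, - dR * x)))"

definition Phi :: "(real \<times> real \<times> real \<times> real) set" where
  "Phi = {(tL, dL, tR, dR). tL > dL + 1 \<and> dL > 0 \<and> tR < - (dR + 1) \<and> dR > 0}"

text \<open>Eigenvalues of [[tau,1],[-delta,0]] are the roots of l^2 - tau l + delta.\<close>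
definition lamLs :: "real \<times> real \<times> real \<times> real \<Rightarrow> real" where
  "lamLs xi = (case xi of (tL, dL, tR, dR) \<Rightarrow>
     THE l. l^2 - tL * l + dL = 0 \<and> 0 < l \<and> l < 1)"

definition lamRs :: "real \<times> real \<times> real \<times> real \<Rightarrow> real" where
  "lamRs xi = (case xi of (tL, dL, tR, dR) \<Rightarrow>
     THE l. l^2 - tR * l + dR = 0 \<and> -1 < l \<and> l < 0)"

definition J2 :: "real \<times> real \<times> real \<times> real \<Rightarrow> real" where
  "J2 xi = max (lamLs xi) (sqrt 2 * lamLs xi / (lamLs xi + 1))
         + max \<bar>lamRs xi\<bar> (sqrt 2 * \<bar>lamRs xi\<bar> / (\<bar>lamRs xi\<bar> + 1))"

definition bcnf_inv_iter :: "real \<times> real \<times> real \<times> real \<Rightarrow> nat \<Rightarrow> real \<times> real \<Rightarrow> real \<times> real" where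
  "bcnf_inv_iter xi i = (inv (bcnf xi)) ^^ i"

end

theory Submission
  imports Defs
begin

locale bc =
  fixes tL dL tR dR s r mu nu :: real
  assumes tL_eq: "tL = s + mu" and dL_eq: "dL = s * mu"
  and tR_eq: "tR = -(r + nu)" and dR_eq: "dR = r * nu"
  and s0: "0 < s" and s1: "s < 1" and r0: "0 < r" and r1: "r < 1"
  and mu1: "mu > 1" and nu1: "nu > 1" and sr: "s + r < 1"
begin

lemma s_ne: "s \<noteq> 0" and mu_ne: "mu \<noteq> 0" and r_ne: "r \<noteq> 0" and nu_ne: "nu \<noteq> 0"
  using s0 mu1 r0 nu1 by auto
lemma dL: "dL > 0" using s0 mu1 dL_eq by simp
lemma dR: "dR > 0" using r0 nu1 dR_eq by simp

definition c where "c = s / (1 - s)"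
lemma c0: "c > 0" unfolding c_def using s0 s1 by simp
lemma c_eq: "c / s = c + 1" unfolding c_def using s0 s1 by (simp add: field_simps)

definition E :: "real \<Rightarrow> real \<Rightarrow> real" where "E x y = y + s * x - c"

definition h :: "real \<times> real \<Rightarrow> real \<times> real" where
  "h p = (case p of (x, y) \<Rightarrow> if 0 \<le> y then (-y/dL, x - 1 + tL * y/dL) else (-y/dR, x - 1 + tR * y/dR))"

lemma hL: "0 \<le> y \<Longrightarrow> h (x, y) = (-y/dL, x - 1 + tL * y/dL)" by (simp add: h_def)
lemma hR: "y \<le> 0 \<Longrightarrow> h (x, y) = (-y/dR, x - 1 + tR * y/dR)" by (cases "y = 0") (auto simp: h_def)

lemma hL_x: "0 \<le> y \<Longrightarrow> fst (h (x,y)) = - y / (s * mu)"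
proof -
  assume y: "0 \<le> y"
  have "fst (h (x,y)) = - y / dL" by (simp add: hL[OF y])
  thus ?thesis by (simp add: dL_eq)
qed
lemma hL_y: "0 \<le> y \<Longrightarrow> snd (h (x,y)) = x - 1 + y/s + y/mu"
proof -
  assume y: "0 \<le> y"
  have "tL * y / dL = y/s + y/mu" using s_ne mu_ne by (simp add: tL_eq dL_eq field_simps)
  moreover have "snd (h (x,y)) = x - 1 + tL * y / dL" by (simp add: hL[OF y])
  ultimately show ?thesis by simp
qed
lemma hR_x: "y \<le> 0 \<Longrightarrow> fst (h (x,y)) = - y / (r * nu)"
proof -
  assume y: "y \<le> 0"
  have "fst (h (x,y)) = - y / dR" by (simp add: hR[OF y])
  thus ?thesis by (simp add: dR_eq)
qed
lemma hR_y: "y \<le> 0 \<Longrightarrow> snd (h (x,y)) = x - 1 - y/r - y/nu"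
proof -
  assume y: "y \<le> 0"
  have "tR * y / dR = - y/r - y/nu" using r_ne nu_ne by (simp add: tR_eq dR_eq field_simps)
  moreover have "snd (h (x,y)) = x - 1 + tR * y / dR" by (simp add: hR[OF y])
  ultimately show ?thesis by simp
qed

lemma EL: "0 \<le> y \<Longrightarrow> E (fst (h (x,y))) (snd (h (x,y))) = E x y / s"
proof -
  assume y: "0 \<le> y"
  have "E (fst (h (x,y))) (snd (h (x,y))) = x - 1 + y/s + y/mu + s * (- y / (s * mu)) - c"
    by (simp add: hL_x[OF y] hL_y[OF y] E_def)
  also have "\<dots> = x - 1 + y/s - c" using s_ne mu_ne by simp
  also have "\<dots> = E x y / s" using c_eq s_ne unfolding E_def by (simp add: diff_divide_distrib add_divide_distrib)
  finally show ?thesis .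
qed

definition W :: "(real \<times> real) set" where "W = {(x,y). 0 \<le> y \<and> E x y > 0}"

lemma W_inv: "p \<in> W \<Longrightarrow> h p \<in> W \<and> E (fst (h p)) (snd (h p)) = E (fst p) (snd p) / s"
proof -
  assume "p \<in> W"
  then obtain x y where p: "p = (x,y)" and y: "0 \<le> y" and e: "E x y > 0" unfolding W_def by auto
  have "s * x > c - y" using e unfolding E_def by simp
  hence "x > (c - y)/s" using s0 by (simp add: field_simps)
  hence "snd (h (x,y)) > (c - y)/s - 1 + y/s + y/mu" using hL_y[OF y] by simp
  also have "(c - y)/s - 1 + y/s + y/mu = c + y/mu" using c_eq by (simp add: diff_divide_distrib)
  finally have "snd (h (x,y)) > 0" using c0 mu1 y by (smt (verit) divide_nonneg_pos)
  moreover have "E (fst (h p)) (snd (h p)) > 0" using EL[OF y] e s0 p by simp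
  ultimately show ?thesis using EL[OF y] p unfolding W_def by (auto simp: case_prod_beta)
qed


definition G :: "(real \<times> real) set" where "G = {p. \<exists>n. (h^^n) p \<in> W}"

lemma W_G: "p \<in> W \<Longrightarrow> p \<in> G" unfolding G_def mem_Collect_eq by (rule exI[of _ 0]) simp

lemma G_back: "h p \<in> G \<Longrightarrow> p \<in> G"
proof -
  assume "h p \<in> G"
  then obtain n where "(h^^n) (h p) \<in> W" unfolding G_def by auto
  hence "(h^^(Suc n)) p \<in> W" by (simp add: funpow_Suc_right del: funpow.simps)
  thus ?thesis unfolding G_def by blast
qed

lemma notG_iter: "p \<notin> G \<Longrightarrow> (h^^n) p \<notin> G"
  by (induction n) (auto dest: G_back)

lemma W_iter: "p \<in> W \<Longrightarrow> (h^^n) p \<in> W \<and> E (fst ((h^^n) p)) (snd ((h^^n) p)) = E (fst p) (snd p) / s^n"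
proof (induction n)
  case 0 thus ?case by simp
next
  case (Suc n)
  hence a: "(h^^n) p \<in> W" and b: "E (fst ((h^^n) p)) (snd ((h^^n) p)) = E (fst p) (snd p) / s^n" by auto
  from W_inv[OF a] b show ?case by (simp add: field_simps)
qed

lemma normE: "E (fst q) (snd q) \<le> 2 * norm q"
proof -
  obtain x y where q: "q = (x,y)" by (cases q)
  have "\<bar>x\<bar> \<le> norm q" "\<bar>y\<bar> \<le> norm q" using norm_fst_le[of x y] norm_snd_le[of y x] q by auto
  moreover have "s * x \<le> \<bar>x\<bar>"
  proof -
    have "s * x \<le> s * \<bar>x\<bar>" using s0 by (intro mult_left_mono) auto
    also have "\<dots> \<le> \<bar>x\<bar>" using s0 s1 by (intro mult_left_le_one_le) auto
    finally show ?thesis .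
  qed
  ultimately show ?thesis using c0 q unfolding E_def by simp
qed

lemma shift_lim: "filterlim (\<lambda>i. g (i + n)) F sequentially \<Longrightarrow> filterlim g F sequentially"
proof (induction n arbitrary: g)
  case 0 thus ?case by simp
next
  case (Suc n)
  have "filterlim (\<lambda>i. (\<lambda>j. g (j + n)) (Suc i)) F sequentially" using Suc.prems by simp
  hence "filterlim (\<lambda>j. g (j + n)) F sequentially" by (rule filterlim_sequentially_Suc[THEN iffD1])
  thus ?case by (rule Suc.IH)
qed

lemma W_esc: "p \<in> W \<Longrightarrow> filterlim (\<lambda>i. norm ((h^^i) p)) at_top sequentially"
proof -
  assume pW: "p \<in> W"
  define E0 where "E0 = E (fst p) (snd p)"
  have E0: "E0 > 0" using pW unfolding W_def E0_def by auto
  have lb: "E0 / (2 * s^i) \<le> norm ((h^^i) p)" for i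
  proof -
    have "E0 / s^i \<le> 2 * norm ((h^^i) p)" using W_iter[OF pW, of i] normE[of "(h^^i) p"] E0_def by simp
    thus ?thesis using s0 by (simp add: field_simps)
  qed
  show ?thesis unfolding filterlim_at_top eventually_sequentially
  proof
    fix Z :: real
    have "1 < 1/s" using s0 s1 by simp
    then obtain N where N: "2 * Z / E0 < (1/s)^N" using real_arch_pow by blast
    have "Z < E0 / (2 * s^N)" using N E0 s0 by (simp add: field_simps power_one_over)
    moreover have "E0 / (2 * s^N) \<le> E0 / (2 * s^n)" if "N \<le> n" for n
    proof -
      have "s^n \<le> s^N" using power_decreasing[of N n s] that s0 s1 by simp
      thus ?thesis using E0 s0 by (simp add: frac_le)
    qed
    ultimately show "\<exists>N. \<forall>n\<ge>N. Z \<le> norm ((h^^n) p)" using lb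
      by (meson less_eq_real_def order_trans)
  qed
qed

lemma G_esc: "p \<in> G \<Longrightarrow> filterlim (\<lambda>i. norm ((h^^i) p)) at_top sequentially"
proof -
  assume "p \<in> G"
  then obtain n where n: "(h^^n) p \<in> W" unfolding G_def by auto
  have "filterlim (\<lambda>i. norm ((h^^i) ((h^^n) p))) at_top sequentially" by (rule W_esc[OF n])
  hence "filterlim (\<lambda>i. norm ((h^^(i+n)) p)) at_top sequentially" by (simp add: funpow_add)
  thus ?thesis by (rule shift_lim)
qed


lemma le_div_r: "0 \<le> (a::real) \<Longrightarrow> 0 < q \<Longrightarrow> q \<le> 1 \<Longrightarrow> a \<le> a / q"
  using mult_right_le_one_le[of a q] pos_le_divide_eq[of q a a] by simp

lemma notG_up: "0 \<le> y \<Longrightarrow> (x,y) \<notin> G \<Longrightarrow> E x y \<le> 0"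
  using W_G unfolding W_def by force

lemma Q1: "0 \<le> x \<Longrightarrow> 0 \<le> y \<Longrightarrow> (x,y) \<notin> G \<Longrightarrow> y + s * x \<le> c"
  using notG_up unfolding E_def by force

lemma Q4: "0 \<le> x \<Longrightarrow> y < 0 \<Longrightarrow> (x,y) \<notin> G \<Longrightarrow> x \<le> 1 + c \<and> - y \<le> 1 + c"
proof -
  assume x: "0 \<le> x" and y: "y < 0" and nG: "(x,y) \<notin> G"
  have hx: "fst (h (x,y)) = - y / (r * nu)" using hR_x[of y x] y by simp
  have hy: "snd (h (x,y)) = x - 1 - y/r - y/nu" using hR_y[of y x] y by simp
  have x'0: "fst (h (x,y)) \<ge> 0" using hx y divide_nonpos_pos[of y "r*nu"] r0 nu1 by simp
  have nG': "h (x,y) \<notin> G" using nG G_back by blast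
  have "snd (h (x,y)) \<le> c"
  proof (cases "snd (h (x,y)) \<ge> 0")
    case True
    have "snd (h (x,y)) + s * fst (h (x,y)) \<le> c"
      using Q1[OF x'0 True] nG' by simp
    moreover have "s * fst (h (x,y)) \<ge> 0" using x'0 s0 by simp
    ultimately show ?thesis by linarith
  next
    case False thus ?thesis using c0 by linarith
  qed
  hence a: "x - 1 + (-y)/r + (-y)/nu \<le> c" using hy by simp
  have "(-y) \<le> (-y)/r" using le_div_r[of "-y" r] y r0 r1 by simp
  moreover have "(-y)/nu \<ge> 0" using y nu1 divide_nonpos_pos[of y nu] by simp
  ultimately have "x + (-y) \<le> 1 + c" using a by linarith
  thus ?thesis using x y by linarith
qed

definition Y3 where "Y3 = r * nu * (1 + c) / s"
definition C3 where "C3 = Y3 + s * (c + Y3 * (1/r + 1/nu)) + c"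

lemma Y3_0: "Y3 \<ge> 0" unfolding Y3_def using r0 nu1 c0 s0 by simp
lemma C3_0: "C3 \<ge> c" unfolding C3_def using Y3_0 r0 nu1 c0 s0 by simp

lemma Q3: "x \<le> 0 \<Longrightarrow> y < 0 \<Longrightarrow> (x,y) \<notin> G \<Longrightarrow> - E x y \<le> C3 \<and> E x y \<le> 0"
proof -
  assume x: "x \<le> 0" and y: "y < 0" and nG: "(x,y) \<notin> G"
  define x' where "x' = fst (h (x,y))"
  define y' where "y' = snd (h (x,y))"
  have hx: "x' = (- y) / (r * nu)" using hR_x[of y x] y x'_def by simp
  have hy: "y' = x - 1 + (-y)/r + (-y)/nu" using hR_y[of y x] y y'_def by simp
  have x'0: "x' \<ge> 0" using hx y divide_nonpos_pos[of y "r*nu"] r0 nu1 by simp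
  have "h (x,y) = (x', y')" by (simp add: x'_def y'_def)
  hence nG': "(x', y') \<notin> G" using nG G_back by metis
  have b: "s * x' \<le> 1 + c \<and> - (1 + c) \<le> y'"
  proof (cases "y' \<ge> 0")
    case True
    have "y' + s * x' \<le> c" using Q1[OF x'0 True nG'] .
    thus ?thesis using True c0 by linarith
  next
    case False
    have "x' \<le> 1 + c \<and> - y' \<le> 1 + c" using Q4[OF x'0 _ nG'] False by simp
    moreover have "s * x' \<le> x'" using s0 s1 x'0 by (simp add: mult_left_le_one_le)
    ultimately show ?thesis by linarith
  qed
  have "s * ((- y) / (r * nu)) \<le> 1 + c" using b hx by simp
  hence "(- y) \<le> Y3" unfolding Y3_def using s0 r0 nu1 by (simp add: field_simps)
  have "- x \<le> c + (-y) * (1/r + 1/nu)" using b hy by (simp add: algebra_simps)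
  also have "\<dots> \<le> c + Y3 * (1/r + 1/nu)"
    using \<open>(- y) \<le> Y3\<close> r0 nu1 by (intro add_left_mono mult_right_mono) auto
  finally have "- x \<le> c + Y3 * (1/r + 1/nu)" .
  hence "s * (- x) \<le> s * (c + Y3 * (1/r + 1/nu))" using s0 by (intro mult_left_mono) auto
  thus ?thesis using \<open>(- y) \<le> Y3\<close> x y s0 c0 unfolding E_def C3_def
    by (smt (verit) mult_minus_right mult_nonneg_nonpos)
qed


lemma Q2: "x \<le> 0 \<Longrightarrow> 0 \<le> y \<Longrightarrow> (x,y) \<notin> G \<Longrightarrow> - C3 \<le> E x y"
proof (rule ccontr)
  assume x: "x \<le> 0" and y: "0 \<le> y" and nG: "(x,y) \<notin> G" and "\<not> - C3 \<le> E x y"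
  hence E0: "E x y < - C3" by simp
  have E0n: "E x y < 0" using E0 C3_0 c0 by linarith
  define M where "M = max y (c * mu / (mu - 1))"
  define Xb where "Xb = max (-x) (M / (s * mu))"
  have M: "c + M / mu \<le> M"
  proof -
    have "c * mu / (mu - 1) \<le> M" unfolding M_def by simp
    hence "c * mu \<le> M * (mu - 1)" using mu1 by (simp add: pos_divide_le_eq)
    hence "c * mu + M \<le> M * mu" by (simp add: algebra_simps)
    hence "(c * mu + M) / mu \<le> M" using mu1 by (simp add: pos_divide_le_eq)
    thus ?thesis using mu1 by (simp add: add_divide_distrib)
  qed
  have inv: "fst ((h^^n) (x,y)) \<le> 0 \<and> 0 \<le> snd ((h^^n) (x,y)) \<and> snd ((h^^n) (x,y)) \<le> M
     \<and> - fst ((h^^n) (x,y)) \<le> Xb \<and> E (fst ((h^^n) (x,y))) (snd ((h^^n) (x,y))) = E x y / s^n" for n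
  proof (induction n)
    case 0 thus ?case using x y unfolding M_def Xb_def by simp
  next
    case (Suc n)
    define a where "a = fst ((h^^n) (x,y))"
    define b where "b = snd ((h^^n) (x,y))"
    have q: "(h^^n) (x,y) = (a, b)" by (simp add: a_def b_def)
    have a: "a \<le> 0" and b: "0 \<le> b" "b \<le> M" and Xa: "- a \<le> Xb" and Eq: "E a b = E x y / s^n"
      using Suc.IH by (auto simp: a_def b_def)
    have nGq: "(a,b) \<notin> G" using notG_iter[OF nG, of n] q by simp
    have sn: "0 < s^n" "s^n \<le> 1" using s0 s1 by (auto simp: power_le_one)
    have "E x y / s^n \<le> E x y" using E0n sn by (simp add: divide_le_eq mult_le_cancel_left_neg) 
    hence Eq2: "E a b < - C3" using Eq E0 by linarith
    define a' where "a' = fst (h (a,b))"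
    define b' where "b' = snd (h (a,b))"
    have hq: "h (a,b) = (a',b')" by (simp add: a'_def b'_def)
    have nGq': "(a',b') \<notin> G" using nGq G_back hq by metis
    have a'eq: "a' = - b / (s * mu)" using hL_x[OF b(1)] a'_def by simp
    have Eab': "E a' b' = E a b / s" using EL[OF b(1), of a] a'_def b'_def by simp
    have a'0: "a' \<le> 0" using a'eq b s0 mu1 by (simp add: divide_nonneg_pos)
    have "E a b / s \<le> E a b" using Eq2 C3_0 c0 s0 s1 by (simp add: divide_le_eq)
    hence Eab'2: "E a' b' < - C3" using Eab' Eq2 by linarith
    have b'0: "0 \<le> b'"
    proof (rule ccontr)
      assume "\<not> 0 \<le> b'"
      hence "- E a' b' \<le> C3" using Q3[OF a'0 _ nGq'] by simp
      thus False using Eab'2 by linarith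
    qed
    have "E a' b' \<le> 0" using notG_up[OF b'0 nGq'] .
    hence "b' \<le> c - s * a'" unfolding E_def by simp
    also have "c - s * a' = c + b / mu" using a'eq s0 mu1 by simp
    also have "\<dots> \<le> c + M / mu" using b mu1 by (simp add: divide_right_mono)
    also have "\<dots> \<le> M" by (rule M)
    finally have b'M: "b' \<le> M" .
    have "- a' = b / (s * mu)" using a'eq by simp
    also have "\<dots> \<le> M / (s * mu)" using b s0 mu1 by (simp add: divide_right_mono)
    also have "\<dots> \<le> Xb" unfolding Xb_def by simp
    finally have Xa': "- a' \<le> Xb" .
    have "E a' b' = E x y / s^(Suc n)" using Eab' Eq s0 by simp
    thus ?case using hq a'0 b'0 b'M Xa' q by simp
  qed
  have lower: "- (s * Xb) - c \<le> E x y / s^n" for n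
  proof -
    have i: "fst ((h^^n) (x,y)) \<le> 0" "0 \<le> snd ((h^^n) (x,y))" "- fst ((h^^n) (x,y)) \<le> Xb"
       "E (fst ((h^^n) (x,y))) (snd ((h^^n) (x,y))) = E x y / s^n" using inv[of n] by auto
    have "s * (- fst ((h^^n) (x,y))) \<le> s * Xb" using i(3) s0 by (intro mult_left_mono) auto
    thus ?thesis using i unfolding E_def by simp
  qed
  have "1 < 1/s" using s0 s1 by simp
  then obtain N where N: "(s * Xb + c) / (- E x y) < (1/s)^N" using real_arch_pow by blast
  have D: "0 < - E x y" using E0n by simp
  have "s * Xb + c < (1/s)^N * (- E x y)" using N by (simp only: pos_divide_less_eq[OF D])
  hence "s * Xb + c < (- E x y) * (1/s)^N" by (simp only: mult.commute)
  hence "E x y / s^N < - (s * Xb) - c" by (simp add: power_one_over)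
  thus False using lower[of N] by linarith
qed

definition C0 where "C0 = C3 + 1 + 2 * c"

lemma boundE: "p \<notin> G \<Longrightarrow> \<bar>E (fst p) (snd p)\<bar> \<le> C0"
proof -
  assume nG: "p \<notin> G"
  obtain x y where p: "p = (x,y)" by (cases p)
  have nG': "(x,y) \<notin> G" using nG p by simp
  have "\<bar>E x y\<bar> \<le> C0"
  proof (cases "0 \<le> y")
    case True
    have e: "E x y \<le> 0" using notG_up[OF True nG'] .
    show ?thesis
    proof (cases "0 \<le> x")
      case True
      have "0 \<le> y + s * x" using \<open>0 \<le> y\<close> True s0 by simp
      thus ?thesis using e C3_0 c0 unfolding C0_def E_def by linarith
    next
      case False
      thus ?thesis using Q2[of x y] True nG' e C3_0 c0 unfolding C0_def by linarith
    qed
  next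
    case False
    show ?thesis
    proof (cases "0 \<le> x")
      case True
      have b: "x \<le> 1 + c" "- y \<le> 1 + c" using Q4[OF True _ nG'] False by auto
      have "s * x \<le> x" using s0 s1 True by (simp add: mult_left_le_one_le)
      moreover have "0 \<le> s * x" using s0 True by simp
      ultimately show ?thesis using b False C3_0 c0 unfolding C0_def E_def by linarith
    next
      case False
      thus ?thesis using Q3[of x y] \<open>\<not> 0 \<le> y\<close> nG' C3_0 c0 unfolding C0_def by linarith
    qed
  qed
  thus ?thesis using p by simp
qed


definition Good :: "real \<Rightarrow> real \<Rightarrow> real \<Rightarrow> real \<Rightarrow> bool" where
  "Good x1 y1 x2 y2 \<longleftrightarrow> (\<forall>t. 0 \<le> t \<and> t \<le> 1 \<longrightarrow> (x1 + t * (x2 - x1), y1 + t * (y2 - y1)) \<notin> G)"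

definition Kp :: "real \<Rightarrow> real \<Rightarrow> bool" where
  "Kp u v \<longleftrightarrow> 0 \<le> mu * u + v \<and> 0 \<le> v - nu * u"

lemma Kp_v: "Kp u v \<Longrightarrow> 0 \<le> v \<and> \<bar>u\<bar> \<le> v"
proof -
  assume k: "Kp u v"
  have a: "0 \<le> nu * (mu * u + v)" using k nu1 unfolding Kp_def by simp
  have b: "0 \<le> mu * (v - nu * u)" using k mu1 unfolding Kp_def by simp
  have "nu * (mu * u + v) + mu * (v - nu * u) = (mu + nu) * v" by (simp add: algebra_simps)
  hence "0 \<le> (mu + nu) * v" using a b by linarith
  hence v: "0 \<le> v" using mu1 nu1 by (simp add: zero_le_mult_iff)
  have "\<bar>u\<bar> \<le> v"
  proof (cases "0 \<le> u")
    case True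
    have "u \<le> nu * u" using True nu1 by (simp add: mult_le_cancel_right1)
    thus ?thesis using k True unfolding Kp_def by simp
  next
    case False
    have "mu * u \<le> u" using False mu1 by (simp add: mult_le_cancel_right1)
    thus ?thesis using k False unfolding Kp_def by linarith
  qed
  thus ?thesis using v by simp
qed

lemma Kp_scale: "0 \<le> a \<Longrightarrow> Kp u v \<Longrightarrow> Kp (a * u) (a * v)"
proof -
  assume a: "0 \<le> a" and k: "Kp u v"
  have "0 \<le> a * (mu * u + v)" "0 \<le> a * (v - nu * u)" using a k unfolding Kp_def by auto
  thus ?thesis unfolding Kp_def by (simp add: algebra_simps)
qed

lemma seg_bound: "Good x1 y1 x2 y2 \<Longrightarrow> Kp (x2 - x1) (y2 - y1) \<Longrightarrow> (1 - s) * (y2 - y1) \<le> 2 * C0"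
proof -
  assume g: "Good x1 y1 x2 y2" and k: "Kp (x2 - x1) (y2 - y1)"
  have "(x1, y1) \<notin> G" using g[unfolded Good_def, rule_format, of 0] by simp
  hence e1: "\<bar>E x1 y1\<bar> \<le> C0" using boundE by fastforce
  have "(x2, y2) \<notin> G" using g[unfolded Good_def, rule_format, of 1] by simp
  hence e2: "\<bar>E x2 y2\<bar> \<le> C0" using boundE by fastforce
  have kv: "\<bar>x2 - x1\<bar> \<le> y2 - y1" using Kp_v[OF k] by simp
  have "s * (x2 - x1) \<ge> - (s * (y2 - y1))"
  proof -
    have "s * \<bar>x2 - x1\<bar> \<le> s * (y2 - y1)" using kv s0 by (intro mult_left_mono) auto
    moreover have "- (s * \<bar>x2 - x1\<bar>) \<le> s * (x2 - x1)" using s0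
      by (metis abs_ge_minus_self abs_mult abs_of_pos minus_le_iff)
    ultimately show ?thesis by linarith
  qed
  hence "E x2 y2 - E x1 y1 \<ge> (1 - s) * (y2 - y1)" unfolding E_def by (simp add: algebra_simps)
  thus ?thesis using e1 e2 by linarith
qed

lemma Good_sym: "Good x1 y1 x2 y2 \<Longrightarrow> Good x2 y2 x1 y1"
  unfolding Good_def
proof (intro allI impI)
  fix t :: real
  assume g: "\<forall>t. 0 \<le> t \<and> t \<le> 1 \<longrightarrow> (x1 + t * (x2 - x1), y1 + t * (y2 - y1)) \<notin> G" and t: "0 \<le> t \<and> t \<le> 1"
  have "(x1 + (1 - t) * (x2 - x1), y1 + (1 - t) * (y2 - y1)) \<notin> G" using g t by auto
  moreover have "(x1 + (1 - t) * (x2 - x1), y1 + (1 - t) * (y2 - y1)) = (x2 + t * (x1 - x2), y2 + t * (y1 - y2))"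
    by (simp add: algebra_simps)
  ultimately show "(x2 + t * (x1 - x2), y2 + t * (y1 - y2)) \<notin> G" by simp
qed

lemma Good_sub1: "Good x1 y1 x2 y2 \<Longrightarrow> 0 \<le> a \<Longrightarrow> a \<le> 1 \<Longrightarrow> Good x1 y1 (x1 + a * (x2 - x1)) (y1 + a * (y2 - y1))"
  unfolding Good_def
proof (intro allI impI)
  fix t :: real
  assume g: "\<forall>t. 0 \<le> t \<and> t \<le> 1 \<longrightarrow> (x1 + t * (x2 - x1), y1 + t * (y2 - y1)) \<notin> G" and t: "0 \<le> t \<and> t \<le> 1"
    and a: "0 \<le> a" "a \<le> 1"
  have "t * a \<le> 1" using t a by (simp add: mult_le_one)
  hence "(x1 + (t * a) * (x2 - x1), y1 + (t * a) * (y2 - y1)) \<notin> G" using g t a by auto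
  thus "(x1 + t * (x1 + a * (x2 - x1) - x1), y1 + t * (y1 + a * (y2 - y1) - y1)) \<notin> G"
    by (simp add: algebra_simps)
qed

lemma Good_sub2: "Good x1 y1 x2 y2 \<Longrightarrow> 0 \<le> a \<Longrightarrow> a \<le> 1 \<Longrightarrow> Good (x1 + a * (x2 - x1)) (y1 + a * (y2 - y1)) x2 y2"
  unfolding Good_def
proof (intro allI impI)
  fix t :: real
  assume g: "\<forall>t. 0 \<le> t \<and> t \<le> 1 \<longrightarrow> (x1 + t * (x2 - x1), y1 + t * (y2 - y1)) \<notin> G" and t: "0 \<le> t \<and> t \<le> 1"
    and a: "0 \<le> a" "a \<le> 1"
  have "t * (1 - a) \<le> 1 - a" using t a by (intro mult_left_le_one_le) auto
  hence "a + t * (1 - a) \<le> 1" by simp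
  moreover have "0 \<le> a + t * (1 - a)" using t a by simp
  ultimately have "(x1 + (a + t * (1 - a)) * (x2 - x1), y1 + (a + t * (1 - a)) * (y2 - y1)) \<notin> G" using g by auto
  thus "(x1 + a * (x2 - x1) + t * (x2 - (x1 + a * (x2 - x1))), y1 + a * (y2 - y1) + t * (y2 - (y1 + a * (y2 - y1)))) \<notin> G"
    by (simp add: algebra_simps)
qed


lemma dirL: "Kp u v \<Longrightarrow> Kp (- v / (s * mu)) (u + v/s + v/mu) \<and> v/s \<le> u + v/s + v/mu"
proof -
  assume k: "Kp u v"
  have v: "0 \<le> v" using Kp_v[OF k] by simp
  have "u + v/mu = (mu * u + v) / mu" using mu_ne by (simp add: field_simps)
  hence uv: "0 \<le> u + v/mu" using k mu1 unfolding Kp_def by simp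
  have m1: "mu * (- v / (s * mu)) = - (v / s)" using mu_ne s_ne by (simp add: field_simps)
  have m2: "nu * (- v / (s * mu)) \<le> 0" using v s0 mu1 nu1
    by (simp add: divide_nonneg_pos mult_nonneg_nonneg)
  have "0 \<le> v / s" using v s0 by simp
  thus ?thesis using uv m1 m2 unfolding Kp_def by linarith
qed

lemma dirR: "Kp u v \<Longrightarrow> Kp (v / (r * nu)) (- u + v/r + v/nu) \<and> v/r \<le> - u + v/r + v/nu"
proof -
  assume k: "Kp u v"
  have v: "0 \<le> v" using Kp_v[OF k] by simp
  have "v/nu - u = (v - nu * u) / nu" using nu_ne by (simp add: field_simps)
  hence uv: "0 \<le> v/nu - u" using k nu1 unfolding Kp_def by simp
  have m1: "nu * (v / (r * nu)) = v / r" using nu_ne r_ne by (simp add: field_simps)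
  have m2: "0 \<le> mu * (v / (r * nu))" using v r0 mu1 nu1
    by (simp add: divide_nonneg_pos mult_nonneg_nonneg)
  have "0 \<le> v / r" using v r0 by simp
  thus ?thesis using uv m1 m2 unfolding Kp_def by linarith
qed

lemma hL_eq: "0 \<le> y \<Longrightarrow> h (x, y) = (- y / (s * mu), x - 1 + y/s + y/mu)"
  using hL_x hL_y by (metis prod.collapse)
lemma hR_eq: "y \<le> 0 \<Longrightarrow> h (x, y) = (- y / (r * nu), x - 1 - y/r - y/nu)"
  using hR_x hR_y by (metis prod.collapse)

lemma notG_h: "p \<notin> G \<Longrightarrow> h p \<notin> G" using G_back by blast

lemma pieceL: "Good x1 y1 x2 y2 \<Longrightarrow> Kp (x2 - x1) (y2 - y1) \<Longrightarrow> 0 \<le> y1 \<Longrightarrow> 0 \<le> y2 \<Longrightarrow>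
  \<exists>a1 b1 a2 b2. Good a1 b1 a2 b2 \<and> Kp (a2 - a1) (b2 - b1) \<and> (y2 - y1) / s \<le> b2 - b1"
proof -
  assume g: "Good x1 y1 x2 y2" and k: "Kp (x2 - x1) (y2 - y1)" and y1: "0 \<le> y1" and y2: "0 \<le> y2"
  define a1 where "a1 = - y1 / (s * mu)"
  define b1 where "b1 = x1 - 1 + y1/s + y1/mu"
  define a2 where "a2 = - y2 / (s * mu)"
  define b2 where "b2 = x2 - 1 + y2/s + y2/mu"
  have "Good a1 b1 a2 b2" unfolding Good_def
  proof (intro allI impI)
    fix t :: real assume t: "0 \<le> t \<and> t \<le> 1"
    have p: "(x1 + t * (x2 - x1), y1 + t * (y2 - y1)) \<notin> G" using g t unfolding Good_def by blast
    have "y1 + t * (y2 - y1) = (1 - t) * y1 + t * y2" by (simp add: algebra_simps)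
    hence yt: "0 \<le> y1 + t * (y2 - y1)" using t y1 y2 by simp
    have "h (x1 + t * (x2 - x1), y1 + t * (y2 - y1)) = (a1 + t * (a2 - a1), b1 + t * (b2 - b1))"
      unfolding hL_eq[OF yt] a1_def a2_def b1_def b2_def using s_ne mu_ne by (simp add: field_simps)
    thus "(a1 + t * (a2 - a1), b1 + t * (b2 - b1)) \<notin> G" using notG_h[OF p] by simp
  qed
  moreover have "a2 - a1 = - (y2 - y1) / (s * mu)" unfolding a1_def a2_def using s_ne mu_ne by (simp add: field_simps)
  moreover have "b2 - b1 = (x2 - x1) + (y2 - y1)/s + (y2 - y1)/mu" unfolding b1_def b2_def using s_ne mu_ne by (simp add: field_simps)
  ultimately show ?thesis using dirL[OF k] by metis
qed

lemma pieceR: "Good x1 y1 x2 y2 \<Longrightarrow> Kp (x2 - x1) (y2 - y1) \<Longrightarrow> y1 \<le> 0 \<Longrightarrow> y2 \<le> 0 \<Longrightarrow>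
  \<exists>a1 b1 a2 b2. Good a1 b1 a2 b2 \<and> Kp (a2 - a1) (b2 - b1) \<and> (y2 - y1) / r \<le> b2 - b1"
proof -
  assume g: "Good x1 y1 x2 y2" and k: "Kp (x2 - x1) (y2 - y1)" and y1: "y1 \<le> 0" and y2: "y2 \<le> 0"
  define a1 where "a1 = - y1 / (r * nu)"
  define b1 where "b1 = x1 - 1 - y1/r - y1/nu"
  define a2 where "a2 = - y2 / (r * nu)"
  define b2 where "b2 = x2 - 1 - y2/r - y2/nu"
  have "Good a1 b1 a2 b2" unfolding Good_def
  proof (intro allI impI)
    fix t :: real assume t: "0 \<le> t \<and> t \<le> 1"
    have p: "(x1 + t * (x2 - x1), y1 + t * (y2 - y1)) \<notin> G" using g t unfolding Good_def by blast
    have "y1 + t * (y2 - y1) = (1 - t) * y1 + t * y2" by (simp add: algebra_simps)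
    hence yt: "y1 + t * (y2 - y1) \<le> 0" using t y1 y2 by (simp add: add_nonpos_nonpos mult_nonneg_nonpos)
    have "h (x1 + t * (x2 - x1), y1 + t * (y2 - y1)) = (a1 + t * (a2 - a1), b1 + t * (b2 - b1))"
      unfolding hR_eq[OF yt] a1_def a2_def b1_def b2_def using r_ne nu_ne by (simp add: field_simps)
    thus "(a1 + t * (a2 - a1), b1 + t * (b2 - b1)) \<notin> G" using notG_h[OF p] by simp
  qed
  hence "Good a2 b2 a1 b1" by (rule Good_sym)
  moreover have "a1 - a2 = (y2 - y1) / (r * nu)" unfolding a1_def a2_def using r_ne nu_ne by (simp add: field_simps)
  moreover have "b1 - b2 = - (x2 - x1) + (y2 - y1)/r + (y2 - y1)/nu" unfolding b1_def b2_def using r_ne nu_ne by (simp add: field_simps)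
  ultimately show ?thesis using dirR[OF k] by metis
qed


lemma grow: "Good x1 y1 x2 y2 \<Longrightarrow> Kp (x2 - x1) (y2 - y1) \<Longrightarrow>
  \<exists>a1 b1 a2 b2. Good a1 b1 a2 b2 \<and> Kp (a2 - a1) (b2 - b1) \<and> (y2 - y1) / (s + r) \<le> b2 - b1"
proof -
  assume g: "Good x1 y1 x2 y2" and k: "Kp (x2 - x1) (y2 - y1)"
  define v where "v = y2 - y1"
  have v: "0 \<le> v" using Kp_v[OF k] v_def by simp
  have sr0: "0 < s + r" using s0 r0 by simp
  have vs: "v / (s + r) \<le> v / s" using v s0 r0 by (intro divide_left_mono) auto
  have vr: "v / (s + r) \<le> v / r" using v s0 r0 by (intro divide_left_mono) auto
  show ?thesis
  proof (cases "0 \<le> y1")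
    case True
    hence "0 \<le> y2" using v v_def by simp
    then obtain a1 b1 a2 b2 where "Good a1 b1 a2 b2" "Kp (a2 - a1) (b2 - b1)" "v / s \<le> b2 - b1"
      using pieceL[OF g k True] v_def by blast
    thus ?thesis using vs v_def by (metis order_trans)
  next
    case False
    hence y1: "y1 < 0" by simp
    show ?thesis
    proof (cases "y2 \<le> 0")
      case True
      then obtain a1 b1 a2 b2 where "Good a1 b1 a2 b2" "Kp (a2 - a1) (b2 - b1)" "v / r \<le> b2 - b1"
        using pieceR[OF g k y1[THEN less_imp_le] True] v_def by blast
      thus ?thesis using vr v_def by (metis order_trans)
    next
      case False
      hence y2: "0 < y2" by simp
      have vpos: "0 < v" using y1 y2 v_def by simp
      define a where "a = - y1 / v"
      have a0: "0 \<le> a" using y1 vpos a_def divide_nonpos_pos[of y1 v] by simp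
      have "- y1 \<le> v" using y2 v_def by simp
      hence "(- y1) / v \<le> 1" using vpos by (subst divide_le_eq_1_pos) auto
      hence a1: "a \<le> 1" using a_def by simp
      have zy: "y1 + a * (y2 - y1) = 0" using vpos a_def v_def by simp
      define zx where "zx = x1 + a * (x2 - x1)"
      show ?thesis
      proof (cases "s * v / (s + r) \<le> y2")
        case True
        have g2: "Good zx 0 x2 y2" using Good_sub2[OF g a0 a1] zy zx_def by simp
        have "x2 - zx = (1 - a) * (x2 - x1)" "y2 - 0 = (1 - a) * (y2 - y1)"
          using zx_def zy by (auto simp: algebra_simps)
        hence k2: "Kp (x2 - zx) (y2 - 0)" using Kp_scale[OF _ k, of "1 - a"] a1 by simp
        obtain a1 b1 a2 b2 where "Good a1 b1 a2 b2" "Kp (a2 - a1) (b2 - b1)" "(y2 - 0) / s \<le> b2 - b1"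
          using pieceL[OF g2 k2] y2 by auto
        moreover have "v / (s + r) \<le> y2 / s"
        proof -
          have "v / (s + r) = (s * v / (s + r)) / s" using s0 by simp
          also have "\<dots> \<le> y2 / s" using True s0 by (intro divide_right_mono) auto
          finally show ?thesis .
        qed
        ultimately show ?thesis using v_def by (metis diff_zero order_trans)
      next
        case False
        have g1: "Good x1 y1 zx 0" using Good_sub1[OF g a0 a1] zy zx_def by simp
        have "zx - x1 = a * (x2 - x1)" "0 - y1 = a * (y2 - y1)"
          using zx_def zy by (auto simp: algebra_simps)
        hence k1: "Kp (zx - x1) (0 - y1)" using Kp_scale[OF a0 k] by simp
        obtain a1 b1 a2 b2 where "Good a1 b1 a2 b2" "Kp (a2 - a1) (b2 - b1)" "(0 - y1) / r \<le> b2 - b1"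
          using pieceR[OF g1 k1] y1 by auto
        moreover have "v / (s + r) \<le> (0 - y1) / r"
        proof -
          have "s * v / (s + r) + r * v / (s + r) = ((s + r) * v) / (s + r)"
            by (simp add: add_divide_distrib[symmetric] algebra_simps)
          hence e: "s * v / (s + r) + r * v / (s + r) = v" using sr0 by simp
          have "r * v / (s + r) \<le> - y1" using False e v_def by linarith
          hence "(r * v / (s + r)) / r \<le> (- y1) / r" using r0 by (intro divide_right_mono) auto
          moreover have "(r * v / (s + r)) / r = v / (s + r)" using r0 by simp
          ultimately show ?thesis by simp
        qed
        ultimately show ?thesis using v_def by (metis order_trans)
      qed
    qed
  qed
qed

lemma iter_grow: "Good x1 y1 x2 y2 \<Longrightarrow> Kp (x2 - x1) (y2 - y1) \<Longrightarrow>
  \<exists>a1 b1 a2 b2. Good a1 b1 a2 b2 \<and> Kp (a2 - a1) (b2 - b1) \<and> (y2 - y1) / (s + r)^n \<le> b2 - b1"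
proof (induction n)
  case 0 thus ?case by auto
next
  case (Suc n)
  then obtain a1 b1 a2 b2 where g: "Good a1 b1 a2 b2" and k: "Kp (a2 - a1) (b2 - b1)"
    and l: "(y2 - y1) / (s + r)^n \<le> b2 - b1" by blast
  obtain c1 d1 c2 d2 where "Good c1 d1 c2 d2" "Kp (c2 - c1) (d2 - d1)" "(b2 - b1) / (s + r) \<le> d2 - d1"
    using grow[OF g k] by blast
  moreover have "(y2 - y1) / (s + r)^(Suc n) \<le> (b2 - b1) / (s + r)"
  proof -
    have "(y2 - y1) / (s + r)^(Suc n) = ((y2 - y1) / (s + r)^n) / (s + r)" by simp
    also have "\<dots> \<le> (b2 - b1) / (s + r)" using l s0 r0 by (intro divide_right_mono) auto
    finally show ?thesis .
  qed
  ultimately show ?case by (meson order_trans)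
qed

lemma no_seg: "Good x1 y1 x2 y2 \<Longrightarrow> Kp (x2 - x1) (y2 - y1) \<Longrightarrow> y1 < y2 \<Longrightarrow> False"
proof -
  assume g: "Good x1 y1 x2 y2" and k: "Kp (x2 - x1) (y2 - y1)" and y: "y1 < y2"
  have "1 < 1 / (s + r)" using s0 r0 sr by simp
  then obtain n where n: "2 * C0 / ((1 - s) * (y2 - y1)) < (1 / (s + r))^n" using real_arch_pow by blast
  obtain a1 b1 a2 b2 where g': "Good a1 b1 a2 b2" and k': "Kp (a2 - a1) (b2 - b1)"
    and l: "(y2 - y1) / (s + r)^n \<le> b2 - b1" using iter_grow[OF g k] by blast
  have b: "(1 - s) * (b2 - b1) \<le> 2 * C0" using seg_bound[OF g' k'] .
  have pos: "0 < (1 - s) * (y2 - y1)" using s1 y by simp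
  have "2 * C0 < (1 / (s + r))^n * ((1 - s) * (y2 - y1))" using n pos by (simp only: pos_divide_less_eq)
  also have "\<dots> = (1 - s) * ((y2 - y1) / (s + r)^n)" by (simp add: power_one_over)
  also have "\<dots> \<le> (1 - s) * (b2 - b1)" using l s1 by (intro mult_left_mono) auto
  finally show False using b by simp
qed

lemma dense_G: "0 < e \<Longrightarrow> \<exists>p \<in> G. dist p z < e"
proof (rule ccontr)
  assume e: "0 < e" and "\<not> (\<exists>p \<in> G. dist p z < e)"
  hence nG: "\<And>p. dist p z < e \<Longrightarrow> p \<notin> G" by blast
  obtain z1 z2 where z: "z = (z1, z2)" by (cases z)
  have "Good z1 z2 z1 (z2 + e/2)" unfolding Good_def
  proof (intro allI impI)
    fix t :: real assume t: "0 \<le> t \<and> t \<le> 1"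
    have "dist (z1 + t * (z1 - z1), z2 + t * (z2 + e / 2 - z2)) z = \<bar>t * (e/2)\<bar>"
      using z by (simp add: dist_Pair_Pair dist_real_def)
    also have "\<dots> < e" using t e by (simp add: abs_mult mult_le_one)
    finally show "(z1 + t * (z1 - z1), z2 + t * (z2 + e / 2 - z2)) \<notin> G" using nG by blast
  qed
  moreover have "Kp (z1 - z1) (z2 + e/2 - z2)" unfolding Kp_def using e by simp
  ultimately show False using no_seg e by force
qed


end

lemma root_ex1:
  fixes T D :: real
  assumes D: "0 < D" and T: "T > D + 1"
  shows "\<exists>!l. l^2 - T * l + D = 0 \<and> 0 < l \<and> l < 1"
proof -
  have T1: "T > 1" using D T by simp
  have disc: "0 < T^2 - 4 * D"
  proof -
    have "(D + 1)^2 < T^2" using T D by (intro power_strict_mono) auto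
    moreover have "4 * D \<le> (D + 1)^2" using sum_squares_bound[of D 1] by (simp add: power2_eq_square algebra_simps)
    ultimately show ?thesis by linarith
  qed
  define S where "S = sqrt (T^2 - 4 * D)"
  have S0: "0 < S" using disc S_def by simp
  have S2: "S^2 = T^2 - 4 * D" using disc S_def by simp
  define l where "l = (T - S) / 2"
  have root: "l^2 - T * l + D = 0" unfolding l_def using S2 by (simp add: power2_eq_square field_simps)
  have "S < T"
  proof -
    have "S^2 < T^2" using S2 D by simp
    thus ?thesis using S0 T1 by (smt (verit) power_mono)
  qed
  hence lpos: "0 < l" unfolding l_def by simp
  have "T - 2 < S"
  proof (cases "T - 2 < 0")
    case True thus ?thesis using S0 by simp
  next
    case False
    have "(T - 2)^2 < S^2" using S2 T by (simp add: power2_eq_square algebra_simps)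
    thus ?thesis using False S0 by (smt (verit) power_mono)
  qed
  hence l1: "l < 1" unfolding l_def by simp
  show ?thesis
  proof (rule ex1I[of _ l])
    show "l^2 - T * l + D = 0 \<and> 0 < l \<and> l < 1" using root lpos l1 by simp
  next
    fix m assume m: "m^2 - T * m + D = 0 \<and> 0 < m \<and> m < 1"
    show "m = l"
    proof (rule ccontr)
      assume ne: "m \<noteq> l"
      have "(m - l) * (m + l - T) = 0" using m root by (simp add: power2_eq_square algebra_simps)
      hence sum: "m + l = T" using ne by simp
      have e1: "D = T * m - m * m" using m by (simp add: power2_eq_square)
      hence "m * l = D" unfolding sum[symmetric] by (simp add: algebra_simps)
      hence "(1 - m) * (1 - l) = 1 - T + D" using sum by (simp add: algebra_simps)
      moreover have "0 < (1 - m) * (1 - l)" using m l1 by simp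
      ultimately show False using T by simp
    qed
  qed
qed

lemma bcnf_eq: "bcnf (tL, dL, tR, dR) (x, y) = (if x \<le> 0 then (tL * x + y + 1, - dL * x) else (tR * x + y + 1, - dR * x))"
  by (simp add: bcnf_def)

theorem lemma6p3:
  fixes xi :: "real \<times> real \<times> real \<times> real"
  assumes "xi \<in> Phi" and "J2 xi < 1"
  shows "closure {p :: real \<times> real.
           filterlim (\<lambda>i. norm (bcnf_inv_iter xi i p)) at_top sequentially} = UNIV"
proof -
  obtain tL dL tR dR where xi: "xi = (tL, dL, tR, dR)" by (cases xi) auto
  have tL: "tL > dL + 1" and dL: "0 < dL" and tR: "tR < - (dR + 1)" and dR: "0 < dR"
    using assms(1) unfolding xi Phi_def by auto
  define s where "s = lamLs xi"
  have s_prop: "s^2 - tL * s + dL = 0 \<and> 0 < s \<and> s < 1"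
    unfolding s_def lamLs_def xi using theI'[OF root_ex1[OF dL tL]] by simp
  define l where "l = lamRs xi"
  have tR': "- tR > dR + 1" using tR by linarith
  have ex1R: "\<exists>!m. m^2 - (- tR) * m + dR = 0 \<and> 0 < m \<and> m < 1" using root_ex1[OF dR tR'] .
  have exR: "\<exists>!l. l^2 - tR * l + dR = 0 \<and> -1 < l \<and> l < 0"
  proof -
    obtain m where m: "m^2 - (- tR) * m + dR = 0 \<and> 0 < m \<and> m < 1"
      and mu: "\<And>m'. m'^2 - (- tR) * m' + dR = 0 \<and> 0 < m' \<and> m' < 1 \<Longrightarrow> m' = m" using ex1R by blast
    show ?thesis
    proof (rule ex1I[of _ "- m"])
      show "(- m)^2 - tR * (- m) + dR = 0 \<and> -1 < - m \<and> - m < 0" using m by simp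
    next
      fix l' assume "l'^2 - tR * l' + dR = 0 \<and> -1 < l' \<and> l' < 0"
      hence "(- l')^2 - (- tR) * (- l') + dR = 0 \<and> 0 < - l' \<and> - l' < 1" by simp
      hence "- l' = m" by (rule mu)
      thus "l' = - m" by simp
    qed
  qed
  have l_prop: "l^2 - tR * l + dR = 0 \<and> -1 < l \<and> l < 0"
    unfolding l_def lamRs_def xi using theI'[OF exR] by simp
  define r where "r = - l"
  have r_prop: "r^2 + tR * r + dR = 0 \<and> 0 < r \<and> r < 1" using l_prop r_def by simp
  have J: "s + r \<le> J2 xi"
  proof -
    have "s \<le> max (lamLs xi) (sqrt 2 * lamLs xi / (lamLs xi + 1))" using s_def by simp
    moreover have "r \<le> max \<bar>lamRs xi\<bar> (sqrt 2 * \<bar>lamRs xi\<bar> / (\<bar>lamRs xi\<bar> + 1))"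
      using r_def l_def l_prop by simp
    ultimately show ?thesis unfolding J2_def by linarith
  qed
  define mu where "mu = tL - s"
  define nu where "nu = - tR - r"
  have dLe: "dL = s * mu" using s_prop unfolding mu_def by (simp add: power2_eq_square algebra_simps)
  have dRe: "dR = r * nu" using r_prop unfolding nu_def by (simp add: power2_eq_square algebra_simps)
  have mu1: "mu > 1"
  proof -
    have "(1 - s) * (mu - 1) > 0" using tL dLe unfolding mu_def by (simp add: algebra_simps)
    thus ?thesis using s_prop by (simp add: zero_less_mult_iff)
  qed
  have nu1: "nu > 1"
  proof -
    have "(1 - r) * (nu - 1) > 0" using tR dRe unfolding nu_def by (simp add: algebra_simps)
    thus ?thesis using r_prop by (simp add: zero_less_mult_iff)
  qed
  interpret I: bc tL dL tR dR s r mu nu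
    by unfold_locales (use s_prop r_prop mu1 nu1 dLe dRe J assms(2) in \<open>auto simp: mu_def nu_def\<close>)
  have hf: "I.h (bcnf xi p) = p" for p
  proof -
    obtain x y where p: "p = (x, y)" by (cases p)
    show ?thesis
    proof (cases "x \<le> 0")
      case True
      have "0 \<le> - dL * x" using True dL by (simp add: mult_nonneg_nonpos)
      thus ?thesis using True dL unfolding p xi by (simp add: I.hL bcnf_eq)
    next
      case False
      have "- dR * x \<le> 0" using False dR by simp
      thus ?thesis using False dR unfolding p xi by (simp add: I.hR bcnf_eq)
    qed
  qed
  have fh: "bcnf xi (I.h p) = p" for p
  proof -
    obtain x y where p: "p = (x, y)" by (cases p)
    show ?thesis
    proof (cases "0 \<le> y")
      case True
      have "- y / dL \<le> 0" using True dL by simp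
      thus ?thesis using True dL unfolding p xi by (simp add: I.hL bcnf_eq)
    next
      case False
      have "y / dR < 0" using False dR by (simp add: divide_neg_pos)
      hence "\<not> - y / dR \<le> 0" by simp
      thus ?thesis using False dR unfolding p xi by (simp add: I.hR bcnf_eq)
    qed
  qed
  have inj: "inj (bcnf xi)" by (rule inj_on_inverseI[of _ I.h]) (simp add: hf)
  have invh: "inv (bcnf xi) = I.h"
  proof
    fix p
    have "inv (bcnf xi) (bcnf xi (I.h p)) = I.h p" by (rule inv_f_f[OF inj])
    thus "inv (bcnf xi) p = I.h p" using fh by simp
  qed
  have it: "bcnf_inv_iter xi i = I.h ^^ i" for i unfolding bcnf_inv_iter_def invh ..
  show ?thesis
  proof (rule set_eqI, rule iffI)
    fix z :: "real \<times> real"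
    show "z \<in> closure {p. filterlim (\<lambda>i. norm (bcnf_inv_iter xi i p)) at_top sequentially}"
      unfolding closure_approachable
    proof (intro allI impI)
      fix e :: real assume e: "0 < e"
      obtain p where p: "p \<in> I.G" "dist p z < e" using I.dense_G[OF e] by blast
      have "filterlim (\<lambda>i. norm (bcnf_inv_iter xi i p)) at_top sequentially"
        unfolding it using I.G_esc[OF p(1)] .
      thus "\<exists>y\<in>{p. filterlim (\<lambda>i. norm (bcnf_inv_iter xi i p)) at_top sequentially}. dist y z < e"
        using p(2) by blast
    qed
  qed simp
qed

end
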